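(* Let $P(x)=a_0(x^2-a_1^2)\cdots(x^2-a_n^2)$ with $a_0\ne0$ and $0<a_1\le\cdots\le a_n$. Then $P(x)/x^j$ for $j=0,\ldots,2n$; $P^{(1)}(x)/x^j$ for $j=0,\ldots,2n-2$; and $P^{(2)}(x)/x^j$ for $j=0,\ldots,2n-4$ are strictly monotonically increasing for $x>a_n$ when $a_0>0$, and strictly monotonically decreasing for $x>a_n$ when $a_0<0$.
   Context: $P^{(l)}$ denotes the $l$-th derivative of $P$. *)

theory Defs
  imports "HOL-Computational_Algebra.Polynomial"
begin

definition evenP :: "real \<Rightarrow> (nat \<Rightarrow> real) \<Rightarrow> nat \<Rightarrow> real poly" where
  "evenP a0 a n = smult a0 (\<Prod>i\<in>{1..n}. [: - ((a i)^2), 0, 1 :])"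

end

theory Submission
  imports Defs
begin

definition Mon :: "real \<Rightarrow> nat \<Rightarrow> (real \<Rightarrow> real) \<Rightarrow> bool" where
  "Mon A d f \<longleftrightarrow> (\<forall>x y. A < x \<longrightarrow> x \<le> y \<longrightarrow> 0 < f x / x^d \<and> f x / x^d \<le> f y / y^d)"

definition SMon :: "real \<Rightarrow> nat \<Rightarrow> (real \<Rightarrow> real) \<Rightarrow> bool" where
  "SMon A d f \<longleftrightarrow> (\<forall>x. A < x \<longrightarrow> 0 < f x / x^d) \<and>
     (\<forall>x y. A < x \<longrightarrow> x < y \<longrightarrow> f x / x^d < f y / y^d)"

lemma Mon_mult:
  assumes A: "0 \<le> A" and "Mon A d f" "Mon A e g" "k = d + e"
  shows "Mon A k (\<lambda>x. f x * g x)"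
  unfolding Mon_def
proof (intro allI impI)
  fix x y :: real assume xy: "A < x" "x \<le> y"
  have x0: "x > 0" "y > 0" using A xy by auto
  have e: "\<And>z::real. z > 0 \<Longrightarrow> f z * g z / z^k = (f z / z^d) * (g z / z^e)"
    using assms(4) by (simp add: power_add)
  from assms(2,3) xy have f: "0 < f x / x^d" "f x / x^d \<le> f y / y^d"
    and g: "0 < g x / x^e" "g x / x^e \<le> g y / y^e" unfolding Mon_def by auto
  show "0 < f x * g x / x ^ k \<and> f x * g x / x ^ k \<le> f y * g y / y ^ k"
    unfolding e[OF x0(1)] e[OF x0(2)]
    using f g by (intro conjI mult_pos_pos mult_mono) auto
qed

lemma SMon_mult:
  assumes A: "0 \<le> A" and "SMon A d f" "Mon A e g" "k = d + e"
  shows "SMon A k (\<lambda>x. f x * g x)"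
  unfolding SMon_def
proof (intro allI impI conjI)
  have e: "\<And>z::real. z > 0 \<Longrightarrow> f z * g z / z^k = (f z / z^d) * (g z / z^e)"
    using assms(4) by (simp add: power_add)
  fix x :: real assume x: "A < x"
  then have "0 < f x / x^d" "0 < g x / x^e" using assms(2,3) unfolding SMon_def Mon_def by auto
  moreover have "x > 0" using x A by auto
  ultimately show "0 < f x * g x / x ^ k" unfolding e[OF \<open>x > 0\<close>] by (metis mult_pos_pos)
next
  have e: "\<And>z::real. z > 0 \<Longrightarrow> f z * g z / z^k = (f z / z^d) * (g z / z^e)"
    using assms(4) by (simp add: power_add)
  fix x y :: real assume xy: "A < x" "x < y"
  have x0: "x > 0" "y > 0" using A xy by auto
  from assms(2,3) xy have f: "0 < f x / x^d" "f x / x^d < f y / y^d"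
    and g: "0 < g x / x^e" "g x / x^e \<le> g y / y^e" unfolding Mon_def SMon_def by auto
  show "f x * g x / x ^ k < f y * g y / y ^ k"
    unfolding e[OF x0(1)] e[OF x0(2)]
    using f g by (intro mult_less_le_imp_less) auto
qed

lemma Mon_add:
  assumes "Mon A d f" "Mon A d g"
  shows "Mon A d (\<lambda>x. f x + g x)"
  using assms unfolding Mon_def add_divide_distrib by (meson add_mono add_pos_pos)

lemma Mon_cmult:
  assumes "Mon A d f" "c > 0"
  shows "Mon A d (\<lambda>x. c * f x)"
  using assms unfolding Mon_def
  by (simp add: times_divide_eq_right[symmetric] del: times_divide_eq_right)

lemma Mon_pow:
  assumes "0 \<le> A"
  shows "Mon A k (\<lambda>x. x^k)"
  using assms unfolding Mon_def by auto

lemma Mon_const: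
  assumes "0 \<le> A" "c > 0"
  shows "Mon A 0 (\<lambda>x. c)"
  using assms unfolding Mon_def by auto

lemma SMon_q:
  assumes "0 \<le> A" "0 < b" "b \<le> A"
  shows "SMon A 2 (\<lambda>x. poly [:- (b^2), 0, 1:] x)"
  unfolding SMon_def
proof (intro allI impI conjI)
  fix x :: real assume x: "A < x"
  then have "b^2 < x^2" using assms by (intro power_strict_mono) auto
  then show "0 < poly [:- b\<^sup>2, 0, 1:] x / x\<^sup>2" using x assms
    by (simp add: power2_eq_square)
next
  fix x y :: real assume xy: "A < x" "x < y"
  have x0: "x > 0" "y > 0" using assms xy by auto
  have e: "\<And>z::real. z > 0 \<Longrightarrow> poly [:- b\<^sup>2, 0, 1:] z / z\<^sup>2 = 1 - b^2 / z^2"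
    by (simp add: power2_eq_square field_simps)
  have "x^2 < y^2" using xy x0 by (intro power_strict_mono) auto
  then have "b^2 / y^2 < b^2 / x^2" using x0 assms
    by (intro divide_strict_left_mono) auto
  then show "poly [:- b\<^sup>2, 0, 1:] x / x\<^sup>2 < poly [:- b\<^sup>2, 0, 1:] y / y\<^sup>2"
    using e[of x] e[of y] x0 xy by auto
qed

lemma SMon_Mon: "SMon A d f \<Longrightarrow> Mon A d f"
  unfolding SMon_def Mon_def by (metis order.order_iff_strict)

lemma Mon_final:
  assumes A: "0 \<le> A" and M: "Mon A d f" and j: "j < d" and xy: "A < x" "x < y"
  shows "f x / x^j < f y / y^j"
proof -
  have x0: "x > 0" "y > 0" using A xy by auto
  have e: "\<And>z::real. z > 0 \<Longrightarrow> f z / z^j = (f z / z^d) * z^(d-j)"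
    using j by (simp add: power_diff)
  from M xy have f: "0 < f x / x^d" "f x / x^d \<le> f y / y^d" unfolding Mon_def by auto
  have "x^(d-j) < y^(d-j)" using j xy x0 by (intro power_strict_mono) auto
  then show ?thesis unfolding e[OF x0(1)] e[OF x0(2)] using f x0
    by (intro mult_le_less_imp_less) auto
qed

lemma SMon_final:
  assumes A: "0 \<le> A" and M: "SMon A d f" and j: "j \<le> d" and xy: "A < x" "x < y"
  shows "f x / x^j < f y / y^j"
proof -
  have x0: "x > 0" "y > 0" using A xy by auto
  have e: "\<And>z::real. z > 0 \<Longrightarrow> f z / z^j = (f z / z^d) * z^(d-j)"
    using j by (simp add: power_diff)
  from M xy have f: "0 < f x / x^d" "f x / x^d < f y / y^d" unfolding SMon_def by auto
  have "x^(d-j) \<le> y^(d-j)" using j xy x0 by (intro power_mono) auto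
  then show ?thesis unfolding e[OF x0(1)] e[OF x0(2)] using f x0
    by (intro mult_less_le_imp_less) auto
qed


lemma Mon_cong: "Mon A d f \<Longrightarrow> g = f \<Longrightarrow> Mon A d g" by simp

lemma prod_Mon:
  fixes a :: "nat \<Rightarrow> real"
  assumes A: "0 \<le> A" and m: "1 \<le> m"
    and ab: "\<And>i. 1 \<le> i \<Longrightarrow> i \<le> m \<Longrightarrow> 0 < a i \<and> a i \<le> A"
  shows "SMon A (2*m) (poly (\<Prod>i\<in>{1..m}. [: - ((a i)^2), 0, 1 :])) \<and>
         Mon A (2*m-1) (poly (pderiv (\<Prod>i\<in>{1..m}. [: - ((a i)^2), 0, 1 :]))) \<and>
         Mon A (2*m-2) (poly (pderiv (pderiv (\<Prod>i\<in>{1..m}. [: - ((a i)^2), 0, 1 :]))))"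
  using m ab
proof (induction m)
  case 0
  then show ?case by simp
next
  case (Suc m)
  define q where "q = [: - ((a (Suc m))^2), 0, 1 :]"
  have qa: "0 < a (Suc m)" "a (Suc m) \<le> A" using Suc.prems by auto
  have Sq: "SMon A 2 (poly q)" unfolding q_def by (rule SMon_q[OF A qa])
  have dq: "Mon A 1 (poly (pderiv q))"
    by (rule Mon_cong[OF Mon_cmult[OF Mon_pow[OF A, of 1], of 2]]) (auto simp: q_def pderiv_pCons)
  have ddq: "Mon A 0 (poly (pderiv (pderiv q)))"
    by (rule Mon_cong[OF Mon_const[OF A, of 2]]) (auto simp: q_def pderiv_pCons)
  show ?case
  proof (cases "m = 0")
    case True
    have "(\<Prod>i\<in>{1..Suc m}. [: - ((a i)^2), 0, 1 :]) = q" using True by (simp add: q_def)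
    then show ?thesis using Sq dq ddq True by (simp add: numeral_2_eq_2)
  next
    case False
    define Q where "Q = (\<Prod>i\<in>{1..m}. [: - ((a i)^2), 0, 1 :])"
    have IH: "SMon A (2*m) (poly Q)" "Mon A (2*m-1) (poly (pderiv Q))"
      "Mon A (2*m-2) (poly (pderiv (pderiv Q)))"
      using Suc.IH Suc.prems False unfolding Q_def by auto
    have eq: "(\<Prod>i\<in>{1..Suc m}. [: - ((a i)^2), 0, 1 :]) = q * Q"
      unfolding q_def Q_def by (simp add: prod.nat_ivl_Suc')
    have "SMon A (2 * Suc m) (\<lambda>x. poly q x * poly Q x)"
      by (rule SMon_mult[OF A Sq SMon_Mon[OF IH(1)]]) simp
    moreover have "(\<lambda>x. poly q x * poly Q x) = poly (q * Q)" by (simp add: fun_eq_iff)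
    ultimately have S0: "SMon A (2 * Suc m) (poly (q * Q))" by simp
    have M1: "Mon A (2 * Suc m - 1) (poly (pderiv (q * Q)))"
    proof (rule Mon_cong[OF Mon_add[OF Mon_mult[OF A SMon_Mon[OF Sq] IH(2)] Mon_mult[OF A IH(1)[THEN SMon_Mon] dq]]])
      show "2 * Suc m - 1 = 2 + (2 * m - 1)" using False by simp
      show "2 * Suc m - 1 = 2 * m + 1" by simp
      show "poly (pderiv (q * Q)) = (\<lambda>x. poly q x * poly (pderiv Q) x + poly Q x * poly (pderiv q) x)"
        by (auto simp: fun_eq_iff pderiv_mult)
    qed
    have M2: "Mon A (2 * Suc m - 2) (poly (pderiv (pderiv (q * Q))))"
    proof (rule Mon_cong[OF Mon_add[OF Mon_add[OF Mon_mult[OF A SMon_Mon[OF Sq] IH(3)]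
          Mon_cmult[OF Mon_mult[OF A dq IH(2)]]] Mon_mult[OF A ddq IH(1)[THEN SMon_Mon]]]])
      show "2 * Suc m - 2 = 2 + (2 * m - 2)" using False by simp
      show "2 * Suc m - 2 = 1 + (2 * m - 1)" using False by simp
      show "2 * Suc m - 2 = 0 + 2 * m" by simp
      show "(2::real) > 0" by simp
      show "poly (pderiv (pderiv (q * Q))) = (\<lambda>x. poly q x * poly (pderiv (pderiv Q)) x
           + 2 * (poly (pderiv q) x * poly (pderiv Q) x) + poly (pderiv (pderiv q)) x * poly Q x)"
        by (auto simp: fun_eq_iff pderiv_mult pderiv_add algebra_simps)
    qed
    show ?thesis unfolding eq using S0 M1 M2 by (simp del: poly_mult)
  qed
qed

theorem lemmaB5:
  fixes a0 :: real and a :: "nat \<Rightarrow> real" and n :: nat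
  defines "P \<equiv> evenP a0 a n"
  assumes "n \<ge> 1" and "a0 \<noteq> 0" and "0 < a 1"
    and "\<And>i j. 1 \<le> i \<Longrightarrow> i \<le> j \<Longrightarrow> j \<le> n \<Longrightarrow> a i \<le> a j"
  shows "(a0 > 0 \<longrightarrow>
           (\<forall>j. j \<le> 2*n \<longrightarrow> (\<forall>x y. a n < x \<and> x < y \<longrightarrow> poly P x / x^j < poly P y / y^j)) \<and>
           (\<forall>j. j + 2 \<le> 2*n \<longrightarrow> (\<forall>x y. a n < x \<and> x < y \<longrightarrow> poly (pderiv P) x / x^j < poly (pderiv P) y / y^j)) \<and>
           (\<forall>j. j + 4 \<le> 2*n \<longrightarrow> (\<forall>x y. a n < x \<and> x < y \<longrightarrow> poly ((pderiv ^^ 2) P) x / x^j < poly ((pderiv ^^ 2) P) y / y^j)))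
       \<and> (a0 < 0 \<longrightarrow>
           (\<forall>j. j \<le> 2*n \<longrightarrow> (\<forall>x y. a n < x \<and> x < y \<longrightarrow> poly P x / x^j > poly P y / y^j)) \<and>
           (\<forall>j. j + 2 \<le> 2*n \<longrightarrow> (\<forall>x y. a n < x \<and> x < y \<longrightarrow> poly (pderiv P) x / x^j > poly (pderiv P) y / y^j)) \<and>
           (\<forall>j. j + 4 \<le> 2*n \<longrightarrow> (\<forall>x y. a n < x \<and> x < y \<longrightarrow> poly ((pderiv ^^ 2) P) x / x^j > poly ((pderiv ^^ 2) P) y / y^j)))"
  proof -
  define Q where "Q = (\<Prod>i\<in>{1..n}. [: - ((a i)^2), 0, 1 :])"
  have PQ: "P = smult a0 Q" unfolding P_def Q_def evenP_def by simp
  have A: "0 \<le> a n" using assms(2,4) assms(5)[of 1 n] by auto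
  have ab: "\<And>i. 1 \<le> i \<Longrightarrow> i \<le> n \<Longrightarrow> 0 < a i \<and> a i \<le> a n"
    using assms(4) assms(5) by (meson less_le_trans order.refl)
  from prod_Mon[OF A assms(2) ab] have
    S: "SMon (a n) (2*n) (poly Q)" and M1: "Mon (a n) (2*n-1) (poly (pderiv Q))"
    and M2: "Mon (a n) (2*n-2) (poly (pderiv (pderiv Q)))" unfolding Q_def by auto
  have e0: "\<And>x. poly P x = a0 * poly Q x" by (simp add: PQ)
  have e1: "\<And>x. poly (pderiv P) x = a0 * poly (pderiv Q) x" by (simp add: PQ pderiv_smult)
  have e2: "\<And>x. poly ((pderiv ^^ 2) P) x = a0 * poly (pderiv (pderiv Q)) x"
    by (simp add: PQ pderiv_smult numeral_2_eq_2)
  have r0: "poly Q x / x^j < poly Q y / y^j" if "j \<le> 2*n" "a n < x" "x < y" for j x y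
    using SMon_final[OF A S that] .
  have r1: "poly (pderiv Q) x / x^j < poly (pderiv Q) y / y^j" if "j + 2 \<le> 2*n" "a n < x" "x < y" for j x y
    using Mon_final[OF A M1 _ that(2,3)] that(1) by simp
  have r2: "poly (pderiv (pderiv Q)) x / x^j < poly (pderiv (pderiv Q)) y / y^j"
    if "j + 4 \<le> 2*n" "a n < x" "x < y" for j x y
    using Mon_final[OF A M2 _ that(2,3)] that(1) by simp
  have sg: "\<And>u v::real. u < v \<Longrightarrow> (a0 > 0 \<longrightarrow> a0 * u < a0 * v) \<and> (a0 < 0 \<longrightarrow> a0 * u > a0 * v)"
    by simp
  show ?thesis
    unfolding e0 e1 e2 times_divide_eq_right[symmetric]
    using sg[OF r0] sg[OF r1] sg[OF r2] by blast
qed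

end
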